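(* If a permutation class has a finite $m$-basis (i.e. it equals the set of permutations avoiding, as submatrices, the matrices of some finite antichain of quasi-permutation matrices), then its $p$-basis is finite.
   Context: A permutation $\sigma$ of $\{1,\dots,n\}$ is identified with its permutation matrix ($M_\sigma(i,j)=1$ iff $i=\sigma(j)$). A matrix $M'$ is a submatrix of $M$ ($M'\preccurlyeq M$) if it is obtained from $M$ by deleting rows and/or columns; the pattern order on permutations is this order restricted to permutation matrices, and a permutation class is a set of permutations closed downward for it. A quasi-permutation matrix is a binary matrix with at most one $1$ in each row and column. An $m$-basis of a permutation class $\mathcal{C}$ is an antichain $\mathcal{M}$ of matrices (for $\preccurlyeq$) such that $\mathcal{C}$ is exactly the set of permutations having no submatrix in $\mathcal{M}$. The $p$-basis of $\mathcal{C}$ is the set of permutations not in $\mathcal{C}$ that are minimal for the pattern order among permutations not in $\mathcal{C}$. *)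

theory Defs
  imports "HOL-Combinatorics.Permutations"
begin

text \<open>A binary matrix with m rows and n columns is a triple (m, n, A) where
  A i j (for i < m, j < n; 0-based) is the entry; entries outside the range are False.\<close>
type_synonym bmat = "nat \<times> nat \<times> (nat \<Rightarrow> nat \<Rightarrow> bool)"

definition wf_mat :: "bmat \<Rightarrow> bool" where
  "wf_mat M = (case M of (m, n, A) \<Rightarrow> \<forall>i j. A i j \<longrightarrow> i < m \<and> j < n)"

definition submat :: "bmat \<Rightarrow> bmat \<Rightarrow> bool" (infix "\<preceq>\<^sub>m" 50) where
  "submat M N = (case M of (p, q, A) \<Rightarrow> case N of (m, n, B) \<Rightarrow>
     \<exists>r c :: nat \<Rightarrow> nat.
        strict_mono_on {..<p} r \<and> r ` {..<p} \<subseteq> {..<m} \<and>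
        strict_mono_on {..<q} c \<and> c ` {..<q} \<subseteq> {..<n} \<and>
        (\<forall>i<p. \<forall>j<q. A i j = B (r i) (c j)))"

definition quasi_perm_mat :: "bmat \<Rightarrow> bool" where
  "quasi_perm_mat M = (wf_mat M \<and> (case M of (m, n, A) \<Rightarrow>
     (\<forall>i j j'. A i j \<and> A i j' \<longrightarrow> j = j') \<and>
     (\<forall>i i' j. A i j \<and> A i' j \<longrightarrow> i = i')))"

text \<open>A permutation of size n is a pair (n, \<sigma>) with \<sigma> a permutation of {0..<n}
  (fixing everything outside), i.e. of {1..n} shifted to 0-based indices.\<close>
type_synonym perm = "nat \<times> (nat \<Rightarrow> nat)"

definition is_perm :: "perm \<Rightarrow> bool" where
  "is_perm \<pi> = (snd \<pi> permutes {..<fst \<pi>})"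

definition perm_mat :: "perm \<Rightarrow> bmat" where
  "perm_mat \<pi> = (case \<pi> of (n, \<sigma>) \<Rightarrow> (n, n, \<lambda>i j. i < n \<and> j < n \<and> i = \<sigma> j))"

definition pattern_le :: "perm \<Rightarrow> perm \<Rightarrow> bool" (infix "\<preceq>\<^sub>p" 50) where
  "pattern_le \<pi> \<tau> = (perm_mat \<pi> \<preceq>\<^sub>m perm_mat \<tau>)"

definition perm_class :: "perm set \<Rightarrow> bool" where
  "perm_class C = ((\<forall>\<tau>\<in>C. is_perm \<tau>) \<and>
     (\<forall>\<tau>\<in>C. \<forall>\<pi>. is_perm \<pi> \<and> \<pi> \<preceq>\<^sub>p \<tau> \<longrightarrow> \<pi> \<in> C))"

definition mat_antichain :: "bmat set \<Rightarrow> bool" where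
  "mat_antichain \<M> = (\<forall>M\<in>\<M>. \<forall>N\<in>\<M>. M \<preceq>\<^sub>m N \<longrightarrow> M = N)"

definition Av_mat :: "bmat set \<Rightarrow> perm set" where
  "Av_mat \<M> = {\<tau>. is_perm \<tau> \<and> (\<forall>M\<in>\<M>. \<not> M \<preceq>\<^sub>m perm_mat \<tau>)}"

definition is_m_basis :: "perm set \<Rightarrow> bmat set \<Rightarrow> bool" where
  "is_m_basis C \<M> = ((\<forall>M\<in>\<M>. wf_mat M) \<and> mat_antichain \<M> \<and> C = Av_mat \<M>)"

definition p_basis :: "perm set \<Rightarrow> perm set" where
  "p_basis C = {\<pi>. is_perm \<pi> \<and> \<pi> \<notin> C \<and>
     (\<forall>\<tau>. is_perm \<tau> \<and> \<tau> \<notin> C \<and> \<tau> \<preceq>\<^sub>p \<pi> \<longrightarrow> \<tau> = \<pi>)}"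

end

theory Submission imports Defs begin

definition down :: "nat \<Rightarrow> nat \<Rightarrow> nat" where "down a x = (if x < a then x else Suc x)"
definition up :: "nat \<Rightarrow> nat \<Rightarrow> nat" where "up a y = (if y < a then y else y - 1)"

lemma up_down[simp]: "up a (down a x) = x" by (simp add: up_def down_def)
lemma down_up: "y \<noteq> a \<Longrightarrow> down a (up a y) = y" by (auto simp: up_def down_def)
lemma down_ne: "down a x \<noteq> a" by (simp add: down_def)
lemma down_lt: "x < n - 1 \<Longrightarrow> a < n \<Longrightarrow> down a x < n" by (simp add: down_def; linarith)
lemma up_lt0: "y < n \<Longrightarrow> y \<noteq> a \<Longrightarrow> a < n \<Longrightarrow> up a y < n - 1" by (auto simp: up_def)
lemma down_mono: "strict_mono_on A (down a)" by (auto simp: strict_mono_on_def down_def)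
lemma up_inj: "y \<noteq> a \<Longrightarrow> z \<noteq> a \<Longrightarrow> up a y = up a z \<longleftrightarrow> y = z" by (auto simp: up_def)
lemma up_less: "y \<noteq> a \<Longrightarrow> z \<noteq> a \<Longrightarrow> y < z \<Longrightarrow> up a y < up a z" by (auto simp: up_def)

lemma delete_point:
  assumes sp: "\<sigma> permutes {..<n}" and k: "k < n"
  defines "s \<equiv> \<sigma> k"
  defines "\<tau> \<equiv> \<lambda>j. if j < n - 1 then up s (\<sigma> (down k j)) else j"
  shows "\<tau> permutes {..<n-1}" "(n-1, \<tau>) \<preceq>\<^sub>p (n, \<sigma>)"
   and "\<And>p q A r c. strict_mono_on {..<p} r \<Longrightarrow> r`{..<p} \<subseteq> {..<n} \<Longrightarrow>
        strict_mono_on {..<q} c \<Longrightarrow> c ` {..<q} \<subseteq> {..<n} \<Longrightarrow>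
        \<forall>i<p. \<forall>j<q. A i j = (r i < n \<and> c j < n \<and> r i = \<sigma> (c j)) \<Longrightarrow>
        s \<notin> r`{..<p} \<Longrightarrow> k \<notin> c`{..<q} \<Longrightarrow> (p,q,A) \<preceq>\<^sub>m perm_mat (n-1,\<tau>)"
proof -
  have inj: "inj_on \<sigma> {..<n}" using sp by (meson permutes_inj_on)
  have sl: "\<And>x. x < n \<Longrightarrow> \<sigma> x < n" using permutes_in_image[OF sp] by simp
  have sn: "s < n" using sl k s_def by simp
  note up_lt = up_lt0[OF _ _ sn] up_lt0[OF _ _ k]
  have sne: "\<And>x. x < n \<Longrightarrow> x \<noteq> k \<Longrightarrow> \<sigma> x \<noteq> s"
    unfolding s_def using inj k by (meson inj_on_eq_iff lessThan_iff)
  have tl: "\<And>j. j < n - 1 \<Longrightarrow> \<tau> j < n - 1 \<and> \<tau> j = up s (\<sigma> (down k j))"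
    unfolding \<tau>_def using down_lt[OF _ k] sl sne down_ne up_lt by auto
  have tinj: "inj_on \<tau> {..<n-1}"
  proof (rule inj_onI)
    fix x y assume x: "x \<in> {..<n-1}" and y: "y \<in> {..<n-1}" and e: "\<tau> x = \<tau> y"
    then have "up s (\<sigma> (down k x)) = up s (\<sigma> (down k y))" using tl by auto
    then have "\<sigma> (down k x) = \<sigma> (down k y)"
      using up_inj sne down_lt[OF _ k] down_ne x y by auto
    then have "down k x = down k y" using inj down_lt[OF _ k] x y by (auto dest: inj_onD)
    then show "x = y" by (metis up_down)
  qed
  have "\<tau> ` {..<n-1} = {..<n-1}"
    by (rule endo_inj_surj) (use tl tinj in force)+
  then have "bij_betw \<tau> {..<n-1} {..<n-1}" using tinj by (simp add: bij_betw_def)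
  moreover have "\<forall>x. x \<notin> {..<n-1} \<longrightarrow> \<tau> x = x" unfolding \<tau>_def by auto
  ultimately show "\<tau> permutes {..<n-1}" using bij_imp_permutes by blast
  show "(n-1, \<tau>) \<preceq>\<^sub>p (n, \<sigma>)"
    unfolding pattern_le_def perm_mat_def submat_def
  proof (simp, intro exI conjI)
    show "strict_mono_on {..<n - Suc 0} (down s)" "strict_mono_on {..<n - Suc 0} (down k)" by (rule down_mono)+
    show "down s ` {..<n - Suc 0} \<subseteq> {..<n}" using down_lt[of _ n s] sl[OF k] s_def by auto
    show "down k ` {..<n - Suc 0} \<subseteq> {..<n}" using down_lt[OF _ k] by auto
    show "\<forall>i<n - Suc 0. \<forall>j<n - Suc 0. (i = \<tau> j) = (down s i < n \<and> down k j < n \<and> down s i = \<sigma> (down k j))"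
    proof (intro allI impI)
      fix i j assume i: "i < n - Suc 0" and j: "j < n - Suc 0"
      have a: "down s i < n" using down_lt[of i n s] sl[OF k] s_def i by auto
      have b: "down k j < n" using down_lt[OF _ k] j by auto
      have "(i = \<tau> j) = (i = up s (\<sigma> (down k j)))" using tl j by auto
      also have "\<dots> = (down s i = \<sigma> (down k j))"
        using down_up[OF sne[OF b down_ne]] by (metis up_down)
      finally show "(i = \<tau> j) = (down s i < n \<and> down k j < n \<and> down s i = \<sigma> (down k j))"
        using a b by auto
    qed
  qed
  fix p q :: nat and A :: "nat \<Rightarrow> nat \<Rightarrow> bool" and r c :: "nat \<Rightarrow> nat"
  assume r: "strict_mono_on {..<p} r" "r`{..<p} \<subseteq> {..<n}"
    and c: "strict_mono_on {..<q} c" "c ` {..<q} \<subseteq> {..<n}"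
    and A: "\<forall>i<p. \<forall>j<q. A i j = (r i < n \<and> c j < n \<and> r i = \<sigma> (c j))"
    and rs: "s \<notin> r`{..<p}" and ck: "k \<notin> c`{..<q}"
  show "(p,q,A) \<preceq>\<^sub>m perm_mat (n-1,\<tau>)"
    unfolding perm_mat_def submat_def
  proof (simp, intro exI conjI)
    show "strict_mono_on {..<p} (up s \<circ> r)" using r rs
      unfolding strict_mono_on_def by (auto intro!: up_less)
    show "strict_mono_on {..<q} (up k \<circ> c)" using c ck
      unfolding strict_mono_on_def by (auto intro!: up_less)
    show "(up s \<circ> r) ` {..<p} \<subseteq> {..<n - Suc 0}" 
    proof (clarsimp)
      fix i assume "i < p"
      then have "r i < n" "r i \<noteq> s" using r rs by auto
      then show "up s (r i) < n - Suc 0" using up_lt(1) by simp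
    qed
    show "(up k \<circ> c) ` {..<q} \<subseteq> {..<n - Suc 0}" 
    proof (clarsimp)
      fix i assume "i < q"
      then have "c i < n" "c i \<noteq> k" using c ck by auto
      then show "up k (c i) < n - Suc 0" using up_lt(2) by simp
    qed
    show "\<forall>i<p. \<forall>j<q. A i j = ((up s \<circ> r) i < n - Suc 0 \<and> (up k \<circ> c) j < n - Suc 0 \<and> (up s \<circ> r) i = \<tau> ((up k \<circ> c) j))"
    proof (intro allI impI)
      fix i j assume i: "i < p" and j: "j < q"
      have ri: "r i < n" "r i \<noteq> s" using r rs i by auto
      have cj: "c j < n" "c j \<noteq> k" using c ck j by auto
      have u1: "up s (r i) < n - 1" using up_lt ri by auto
      have u2: "up k (c j) < n - 1" using up_lt cj by auto
      have t: "\<tau> (up k (c j)) = up s (\<sigma> (c j))" using tl[OF u2] down_up[OF cj(2)] by simp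
      have "(up s (r i) = up s (\<sigma> (c j))) = (r i = \<sigma> (c j))"
        by (rule up_inj[OF ri(2) sne[OF cj(1) cj(2)]])
      then show "A i j = ((up s \<circ> r) i < n - Suc 0 \<and> (up k \<circ> c) j < n - Suc 0 \<and> (up s \<circ> r) i = \<tau> ((up k \<circ> c) j))"
        using A i j ri cj u1 u2 t by auto
    qed
  qed
qed

theorem corollary1:
  fixes C :: "perm set" and \<M> :: "bmat set"
  assumes "perm_class C"
    and "finite \<M>"
    and "\<forall>M\<in>\<M>. quasi_perm_mat M"
    and "is_m_basis C \<M>"
  shows "finite (p_basis C)"
proof -
  define K where "K = Max ((\<lambda>(p,q,A). p+q) ` \<M>)"
  have Kb: "\<And>p q A. (p,q,A) \<in> \<M> \<Longrightarrow> p + q \<le> K"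
    unfolding K_def using assms(2) by (force intro: Max_ge)
  have CA: "C = Av_mat \<M>" using assms(4) by (simp add: is_m_basis_def)
  have sub: "p_basis C \<subseteq> (\<Union>n\<in>{..K}. Pair n ` {\<sigma>. \<sigma> permutes {..<n}})"
  proof
    fix \<pi> assume pb: "\<pi> \<in> p_basis C"
    obtain n \<sigma> where pi: "\<pi> = (n, \<sigma>)" by fastforce
    have sp: "\<sigma> permutes {..<n}" using pb pi by (simp add: p_basis_def is_perm_def)
    have "\<pi> \<notin> Av_mat \<M>" using pb CA by (simp add: p_basis_def)
    then obtain M where M: "M \<in> \<M>" "M \<preceq>\<^sub>m perm_mat (n,\<sigma>)"
      using pb pi by (auto simp: Av_mat_def p_basis_def)
    obtain p q A where MA: "M = (p,q,A)" by (metis prod_cases3)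
    obtain r c where r: "strict_mono_on {..<p} r" "r`{..<p} \<subseteq> {..<n}"
      and c: "strict_mono_on {..<q} c" "c ` {..<q} \<subseteq> {..<n}"
      and A: "\<forall>i<p. \<forall>j<q. A i j = (r i < n \<and> c j < n \<and> r i = \<sigma> (c j))"
      using M(2) unfolding MA submat_def perm_mat_def by auto
    have "n \<le> p + q"
    proof (rule ccontr)
      assume big: "\<not> n \<le> p + q"
      define B where "B = c`{..<q} \<union> {x\<in>{..<n}. \<sigma> x \<in> r`{..<p}}"
      have inj: "inj_on \<sigma> {..<n}" using sp by (meson permutes_inj_on)
      have "card {x\<in>{..<n}. \<sigma> x \<in> r`{..<p}} \<le> card (r`{..<p})"
        by (rule card_inj_on_le) (use inj in \<open>auto intro: inj_on_subset\<close>)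
      also have "\<dots> \<le> p" using card_image_le by fastforce
      moreover have "card (c`{..<q}) \<le> q" using card_image_le by fastforce
      ultimately have "card B \<le> q + p" unfolding B_def
        by (meson add_mono card_Un_le le_trans)
      have fB: "finite B" unfolding B_def by simp
      have "\<not> {..<n} \<subseteq> B"
      proof
        assume "{..<n} \<subseteq> B"
        then have "card {..<n} \<le> card B" using fB by (rule card_mono[rotated])
        then show False using big \<open>card B \<le> q + p\<close> by simp
      qed
      then obtain k where k: "k < n" "k \<notin> B" by auto
      define \<tau> where "\<tau> \<equiv> \<lambda>j. if j < n - 1 then up (\<sigma> k) (\<sigma> (down k j)) else j"
      note D = delete_point[OF sp k(1), folded \<tau>_def]
      have "(p,q,A) \<preceq>\<^sub>m perm_mat (n-1,\<tau>)"
        by (rule D(3)[OF r c A]) (use k B_def in auto)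
      then have "(n-1,\<tau>) \<notin> C" using M(1) MA CA by (auto simp: Av_mat_def)
      then have "(n-1,\<tau>) = \<pi>" using pb D(1,2) pi by (auto simp: p_basis_def is_perm_def)
      then show False using pi k by auto
    qed
    then have "n \<le> K" using Kb M(1) MA by fastforce
    then show "\<pi> \<in> (\<Union>n\<in>{..K}. Pair n ` {\<sigma>. \<sigma> permutes {..<n}})" using pi sp by auto
  qed
  show ?thesis
    by (rule finite_subset[OF sub]) (auto intro: finite_permutations)
qed

end
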